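(* Let $P(\vec\alpha,\vec\beta,\vec\xi)\in\mathcal{P}$ be a syntactically compositional predicate and $P'(\vec\alpha,\vec\xi)\in\mathcal{P}$ a predicate which is a completion of $P$ with respect to a pair of constants $\vec c=(c_1,c_2)$. Then $P'(\vec\alpha,\vec\xi)\Leftrightarrow P(\vec\alpha,\vec c,\vec\xi)$ holds, and the entailment $\exists\vec\beta.\ P(\vec\alpha,\vec\beta,\vec\xi)\ast P'(\vec\beta,\vec\xi)\Rightarrow P'(\vec\alpha,\vec\xi)$ holds.
   Context: Separation logic setting: location variables (interpreted in a set $\mathbb{L}$ of locations, with a constant ${\sf nil}$) and data variables; pointer fields $\mathcal{F}$ and data fields $\mathcal{D}$. A state is $(s,h)$ with $s$ a stack assigning values to variables and $h$ a finite partial heap mapping (location, field) pairs to locations or data values. Formulas: pure parts (location (dis)equalities and data constraints in a decidable theory), spatial parts $\mathtt{emp}$, $E\mapsto\rho$, predicate atoms, $\ast$ (separating conjunction over domain-disjoint heaps), with $\land,\lor,\exists$. Predicates are defined by finite sets of rules $Q(E,\vec F)::=\exists\vec Z.\Pi\land\Sigma$ with least-fixed-point semantics; an entailment $A\Rightarrow B$ means every $(s,h)$ satisfying $A$ satisfies $B$; $\Leftrightarrow$ means entailment in both directions. Syntactic compositionality: $P$ has parameters $(\vec\alpha,\vec\beta,\vec\xi)$, $\vec\alpha=(E,C)$ (source), $\vec\beta=(F,H)$ (hole), $E,F$ location variables, $C,H$ data variables, $\vec\xi$ static parameters. $P$ is syntactically compositional if it has exactly one base rule $P(\vec\alpha,\vec\beta,\vec\xi)::=\alpha_1=\beta_1\land\alpha_2=\beta_2\land\mathtt{emp}$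 and at least one inductive rule, every inductive rule being of the form $P(\vec\alpha,\vec\beta,\vec\xi)::=\exists\vec Z.\ \Pi\land\Sigma_1\ast\Sigma_2\ast P(\vec\gamma,\vec\beta,\vec\xi)$ where $\Sigma_1$ is a nonempty separating conjunction of points-to atoms containing a unique points-to atom from $E$ and all location variables of $\vec Z$, whose Gaifman graph is a connected DAG rooted at $E$; $\Sigma_2$ is a possibly empty separating conjunction of predicate atoms whose first arguments are sink vertices of that graph; $\vec\gamma$ consists of variables of $\vec Z$; and the variables of $\vec\beta$ do not occur in $\Pi,\Sigma_1,\Sigma_2,\vec\gamma$. Completion: $P'$ with parameters $(\vec\alpha,\vec\xi)$ is a completion of $P$ with respect to $\vec c=(c_1,c_2)$ if its rules are obtained from those of $P$ by the substitution $\beta_1\mapsto c_1,\beta_2\mapsto c_2$: its only base rule is $P'(\vec\alpha,\vec\xi)::=\alpha_1=c_1\land\alpha_2=c_2\land\mathtt{emp}$, and for each inductive rule $P(\vec\alpha,\vec\beta,\vec\xi)::=\exists\vec Z.\ \Pi\land\Sigma_1\ast\Sigma_2\ast P(\vec\gamma,\vec\beta,\vec\xi)$ of $P$, $P'$ has the inductive rule $P'(\vec\alpha,\vec\xi)::=\exists\vec Z.\ \Pi\land\Sigma_1\ast\Sigma_2\ast P'(\vec\gamma,\vec\xi)$ (and these are all its rules). *)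

theory Defs
  imports Main "HOL-Library.Multiset"
begin

datatype 'n var = LV 'n | DV 'n

datatype ('l, 'd) val = Loc 'l | Dat 'd

datatype ('n, 'l, 'd) trm = V "'n var" | LC 'l | DC 'd

text \<open>Pure atoms: (dis)equalities and data constraints.  A data constraint is a
  constraint symbol 'c applied to terms; its meaning is given by a fixed
  interpretation dI of the (decidable) data theory.\<close>
datatype ('n, 'l, 'd, 'c) patom =
    PEq "('n, 'l, 'd) trm" "('n, 'l, 'd) trm"
  | PNeq "('n, 'l, 'd) trm" "('n, 'l, 'd) trm"
  | PData 'c "('n, 'l, 'd) trm list"

text \<open>Spatial atoms: points-to atoms E |-> rho (rho given by a list of pointer-field
  entries with fields 'pf and a list of data-field entries with fields 'df),
  and predicate atoms.\<close>
datatype ('n, 'l, 'd, 'pf, 'df, 'p) satom =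
    SPt "('n, 'l, 'd) trm" "('pf \<times> ('n, 'l, 'd) trm) list" "('df \<times> ('n, 'l, 'd) trm) list"
  | SPred 'p "('n, 'l, 'd) trm list"

datatype ('n, 'l, 'd, 'c, 'pf, 'df, 'p) form =
    FPure "('n, 'l, 'd, 'c) patom"
  | FEmp
  | FAtom "('n, 'l, 'd, 'pf, 'df, 'p) satom"
  | FSep "('n, 'l, 'd, 'c, 'pf, 'df, 'p) form" "('n, 'l, 'd, 'c, 'pf, 'df, 'p) form"
  | FAnd "('n, 'l, 'd, 'c, 'pf, 'df, 'p) form" "('n, 'l, 'd, 'c, 'pf, 'df, 'p) form"
  | FOr "('n, 'l, 'd, 'c, 'pf, 'df, 'p) form" "('n, 'l, 'd, 'c, 'pf, 'df, 'p) form"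
  | FEx "'n var" "('n, 'l, 'd, 'c, 'pf, 'df, 'p) form"

text \<open>An inductive rule  Q(params) ::= EX Z. Pi /\ Sigma  is stored as
  (Z, Pi, Sigma): Pi is a conjunction (list) of pure atoms and Sigma a separating
  conjunction (list) of spatial atoms (the empty list being emp).\<close>
type_synonym ('n, 'l, 'd, 'c, 'pf, 'df) rule =
  "'n var list \<times> ('n, 'l, 'd, 'c) patom list \<times> ('n, 'l, 'd, 'pf, 'df, 'n) satom list"

type_synonym ('n, 'l, 'd, 'c, 'pf, 'df, 'p) prule =
  "'n var list \<times> ('n, 'l, 'd, 'c) patom list \<times> ('n, 'l, 'd, 'pf, 'df, 'p) satom list"

type_synonym ('n, 'l, 'd, 'c, 'pf, 'df, 'p) sid =
  "'p \<Rightarrow> ('n var list \<times> ('n, 'l, 'd, 'c, 'pf, 'df, 'p) prule list)"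

type_synonym ('n, 'l, 'd) stack = "('n \<Rightarrow> 'l) \<times> ('n \<Rightarrow> 'd)"
type_synonym ('l, 'd, 'pf, 'df) heap = "('l \<times> 'pf \<rightharpoonup> 'l) \<times> ('l \<times> 'df \<rightharpoonup> 'd)"

fun evalv :: "('n, 'l, 'd) stack \<Rightarrow> 'n var \<Rightarrow> ('l, 'd) val" where
  "evalv s (LV x) = Loc (fst s x)"
| "evalv s (DV x) = Dat (snd s x)"

fun evalt :: "('n, 'l, 'd) stack \<Rightarrow> ('n, 'l, 'd) trm \<Rightarrow> ('l, 'd) val" where
  "evalt s (V x) = evalv s x"
| "evalt s (LC l) = Loc l"
| "evalt s (DC d) = Dat d"

definition hemp :: "('l, 'd, 'pf, 'df) heap" where
  "hemp = (Map.empty, Map.empty)"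

definition hdisj :: "('l, 'd, 'pf, 'df) heap \<Rightarrow> ('l, 'd, 'pf, 'df) heap \<Rightarrow> bool" where
  "hdisj h1 h2 \<longleftrightarrow> dom (fst h1) \<inter> dom (fst h2) = {} \<and> dom (snd h1) \<inter> dom (snd h2) = {}"

definition hunion :: "('l, 'd, 'pf, 'df) heap \<Rightarrow> ('l, 'd, 'pf, 'df) heap \<Rightarrow> ('l, 'd, 'pf, 'df) heap" where
  "hunion h1 h2 = (fst h1 ++ fst h2, snd h1 ++ snd h2)"

definition hfinite :: "('l, 'd, 'pf, 'df) heap \<Rightarrow> bool" where
  "hfinite h \<longleftrightarrow> finite (dom (fst h)) \<and> finite (dom (snd h))"

fun sat_pure :: "('c \<Rightarrow> 'd list \<Rightarrow> bool) \<Rightarrow> ('n, 'l, 'd) stack \<Rightarrow> ('n, 'l, 'd, 'c) patom \<Rightarrow> bool" where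
  "sat_pure dI s (PEq t1 t2) = (evalt s t1 = evalt s t2)"
| "sat_pure dI s (PNeq t1 t2) = (evalt s t1 \<noteq> evalt s t2)"
| "sat_pure dI s (PData c ts) = (\<exists>ds. map (evalt s) ts = map Dat ds \<and> dI c ds)"

definition sat_pt :: "('n, 'l, 'd) stack \<Rightarrow> ('l, 'd, 'pf, 'df) heap \<Rightarrow> ('n, 'l, 'd) trm
    \<Rightarrow> ('pf \<times> ('n, 'l, 'd) trm) list \<Rightarrow> ('df \<times> ('n, 'l, 'd) trm) list \<Rightarrow> bool" where
  "sat_pt s h E ps ds \<longleftrightarrow>
     (\<exists>l. evalt s E = Loc l
        \<and> dom (fst h) = {(l, f) | f. f \<in> fst ` set ps}
        \<and> dom (snd h) = {(l, f) | f. f \<in> fst ` set ds}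
        \<and> (\<forall>(f, t) \<in> set ps. \<exists>l'. evalt s t = Loc l' \<and> fst h (l, f) = Some l')
        \<and> (\<forall>(f, t) \<in> set ds. \<exists>d. evalt s t = Dat d \<and> snd h (l, f) = Some d))"

fun sat_satom :: "('p \<Rightarrow> ('l, 'd) val list \<Rightarrow> ('l, 'd, 'pf, 'df) heap \<Rightarrow> bool)
    \<Rightarrow> ('n, 'l, 'd) stack \<Rightarrow> ('l, 'd, 'pf, 'df) heap \<Rightarrow> ('n, 'l, 'd, 'pf, 'df, 'p) satom \<Rightarrow> bool" where
  "sat_satom I s h (SPt E ps ds) = sat_pt s h E ps ds"
| "sat_satom I s h (SPred p ts) = I p (map (evalt s) ts) h"

fun sat_sep :: "('p \<Rightarrow> ('l, 'd) val list \<Rightarrow> ('l, 'd, 'pf, 'df) heap \<Rightarrow> bool)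
    \<Rightarrow> ('n, 'l, 'd) stack \<Rightarrow> ('l, 'd, 'pf, 'df) heap \<Rightarrow> ('n, 'l, 'd, 'pf, 'df, 'p) satom list \<Rightarrow> bool" where
  "sat_sep I s h [] = (h = hemp)"
| "sat_sep I s h (a # as) =
     (\<exists>h1 h2. hdisj h1 h2 \<and> h = hunion h1 h2 \<and> sat_satom I s h1 a \<and> sat_sep I s h2 as)"

lemma sat_sep_mono: "I \<le> J \<Longrightarrow> sat_sep I s h xs \<longrightarrow> sat_sep J s h xs"
proof (induction xs arbitrary: h)
  case Nil then show ?case by simp
next
  case (Cons a xs)
  have "sat_satom I s h1 a \<Longrightarrow> sat_satom J s h1 a" for h1
  proof -
    assume H: "sat_satom I s h1 a"
    have IJ: "I p vs hp \<Longrightarrow> J p vs hp" for p vs hp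
      using Cons.prems le_funD[OF le_funD[OF le_funD[OF Cons.prems]]] by (simp add: le_bool_def)
    show "sat_satom J s h1 a" using H IJ by (cases a) simp_all
  qed
  then show ?case using Cons by fastforce
qed

text \<open>Least-fixed-point semantics of the predicates: P(vs) holds in h iff for some
  rule (Z, Pi, Sigma) of P and some stack s mapping the parameters to vs
  (the values of all other variables, in particular those of Z, being
  existentially chosen), s satisfies Pi and (s, h) satisfies Sigma.\<close>
inductive pred_sem :: "('c \<Rightarrow> 'd list \<Rightarrow> bool) \<Rightarrow> ('n, 'l, 'd, 'c, 'pf, 'df, 'p) sid
    \<Rightarrow> 'p \<Rightarrow> ('l, 'd) val list \<Rightarrow> ('l, 'd, 'pf, 'df) heap \<Rightarrow> bool"
  for dI \<Delta> where
  "\<Delta> p = (ps, rs) \<Longrightarrow> (Z, Pi, Sig) \<in> set rs \<Longrightarrow> map (evalv s) ps = vs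
   \<Longrightarrow> (\<forall>a \<in> set Pi. sat_pure dI s a) \<Longrightarrow> sat_sep (pred_sem dI \<Delta>) s h Sig
   \<Longrightarrow> pred_sem dI \<Delta> p vs h"
  monos sat_sep_mono

fun upd_var :: "('n, 'l, 'd) stack \<Rightarrow> 'n var \<Rightarrow> ('l, 'd) val \<Rightarrow> ('n, 'l, 'd) stack \<Rightarrow> bool" where
  "upd_var s (LV x) v s' = (\<exists>l. v = Loc l \<and> s' = ((fst s)(x := l), snd s))"
| "upd_var s (DV x) v s' = (\<exists>d. v = Dat d \<and> s' = (fst s, (snd s)(x := d)))"

fun sat :: "('c \<Rightarrow> 'd list \<Rightarrow> bool) \<Rightarrow> ('n, 'l, 'd, 'c, 'pf, 'df, 'p) sid
    \<Rightarrow> ('n, 'l, 'd) stack \<Rightarrow> ('l, 'd, 'pf, 'df) heap \<Rightarrow> ('n, 'l, 'd, 'c, 'pf, 'df, 'p) form \<Rightarrow> bool" where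
  "sat dI \<Delta> s h (FPure a) = sat_pure dI s a"
| "sat dI \<Delta> s h FEmp = (h = hemp)"
| "sat dI \<Delta> s h (FAtom a) = sat_satom (pred_sem dI \<Delta>) s h a"
| "sat dI \<Delta> s h (FSep A B) =
     (\<exists>h1 h2. hdisj h1 h2 \<and> h = hunion h1 h2 \<and> sat dI \<Delta> s h1 A \<and> sat dI \<Delta> s h2 B)"
| "sat dI \<Delta> s h (FAnd A B) = (sat dI \<Delta> s h A \<and> sat dI \<Delta> s h B)"
| "sat dI \<Delta> s h (FOr A B) = (sat dI \<Delta> s h A \<or> sat dI \<Delta> s h B)"
| "sat dI \<Delta> s h (FEx x A) = (\<exists>v s'. upd_var s x v s' \<and> sat dI \<Delta> s' h A)"

definition entails where
  "entails dI \<Delta> A B \<longleftrightarrow> (\<forall>s h. hfinite h \<longrightarrow> sat dI \<Delta> s h A \<longrightarrow> sat dI \<Delta> s h B)"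

definition equiv_sl where
  "equiv_sl dI \<Delta> A B \<longleftrightarrow> entails dI \<Delta> A B \<and> entails dI \<Delta> B A"

fun vars_trm :: "('n, 'l, 'd) trm \<Rightarrow> 'n var set" where
  "vars_trm (V x) = {x}"
| "vars_trm (LC l) = {}"
| "vars_trm (DC d) = {}"

fun vars_patom :: "('n, 'l, 'd, 'c) patom \<Rightarrow> 'n var set" where
  "vars_patom (PEq t1 t2) = vars_trm t1 \<union> vars_trm t2"
| "vars_patom (PNeq t1 t2) = vars_trm t1 \<union> vars_trm t2"
| "vars_patom (PData c ts) = \<Union> (vars_trm ` set ts)"

fun vars_satom :: "('n, 'l, 'd, 'pf, 'df, 'p) satom \<Rightarrow> 'n var set" where
  "vars_satom (SPt E ps ds) = vars_trm E \<union> \<Union> (vars_trm ` snd ` set ps) \<union> \<Union> (vars_trm ` snd ` set ds)"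
| "vars_satom (SPred p ts) = \<Union> (vars_trm ` set ts)"

definition gaif_vertices :: "('n, 'l, 'd, 'pf, 'df, 'p) satom list \<Rightarrow> 'n set" where
  "gaif_vertices Sig = {u. \<exists>a \<in> set Sig. LV u \<in> vars_satom a}"

definition gaif_edges :: "('n, 'l, 'd, 'pf, 'df, 'p) satom list \<Rightarrow> ('n \<times> 'n) set" where
  "gaif_edges Sig = {(u, v). \<exists>ps ds. SPt (V (LV u)) ps ds \<in> set Sig \<and> V (LV v) \<in> snd ` set ps}"

definition is_pt_from :: "'n \<Rightarrow> ('n, 'l, 'd, 'pf, 'df, 'p) satom \<Rightarrow> bool" where
  "is_pt_from u a \<longleftrightarrow> (\<exists>ps ds. a = SPt (V (LV u)) ps ds)"

definition gaif_sink :: "('n, 'l, 'd, 'pf, 'df, 'p) satom list \<Rightarrow> 'n \<Rightarrow> bool" where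
  "gaif_sink Sig v \<longleftrightarrow> v \<in> gaif_vertices Sig \<and> (\<nexists>w. (v, w) \<in> gaif_edges Sig)"

text \<open>An inductive rule of P with source (e, c), hole (f, hh) and static
  parameters xi, of the required shape
  EX Z. Pi /\ Sigma1 * Sigma2 * P(gamma, beta, xi)
  (the separating conjunction being taken up to reordering of its atoms).\<close>
definition comp_ind_rule ::
  "'p \<Rightarrow> 'n \<Rightarrow> 'n \<Rightarrow> 'n \<Rightarrow> 'n \<Rightarrow> 'n var list \<Rightarrow> ('n, 'l, 'd, 'c, 'pf, 'df, 'p) prule \<Rightarrow> bool" where
  "comp_ind_rule P e c f hh xi r \<longleftrightarrow>
    (\<exists>Z Pi Sig Sig1 Sig2 gam.
       r = (Z, Pi, Sig)
     \<and> mset Sig = mset (Sig1 @ Sig2 @ [SPred P (map V gam @ [V (LV f), V (DV hh)] @ map V xi)])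
     \<comment> \<open>Sigma1: nonempty separating conjunction of points-to atoms\<close>
     \<and> Sig1 \<noteq> [] \<and> (\<forall>a \<in> set Sig1. \<exists>u. is_pt_from u a)
     \<comment> \<open>with a unique points-to atom from E\<close>
     \<and> length (filter (is_pt_from e) Sig1) = 1
     \<comment> \<open>containing all location variables of Z\<close>
     \<and> (\<forall>z. LV z \<in> set Z \<longrightarrow> z \<in> gaif_vertices Sig1)
     \<comment> \<open>whose Gaifman graph is a connected DAG rooted at E\<close>
     \<and> acyclic (gaif_edges Sig1)
     \<and> (\<forall>v \<in> gaif_vertices Sig1. (e, v) \<in> (gaif_edges Sig1)\<^sup>*)
     \<comment> \<open>Sigma2: predicate atoms whose first arguments are sinks\<close>
     \<and> (\<forall>a \<in> set Sig2. \<exists>Q v ts. a = SPred Q (V (LV v) # ts) \<and> gaif_sink Sig1 v)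
     \<comment> \<open>gamma consists of variables of Z\<close>
     \<and> length gam = 2 \<and> set gam \<subseteq> set Z
     \<comment> \<open>beta does not occur in Pi, Sigma1, Sigma2, gamma\<close>
     \<and> (\<forall>x \<in> {LV f, DV hh}.
          x \<notin> \<Union> (vars_patom ` set Pi) \<and> x \<notin> \<Union> (vars_satom ` set Sig1)
        \<and> x \<notin> \<Union> (vars_satom ` set Sig2) \<and> x \<notin> set gam))"

text \<open>P is syntactically compositional: its parameters are (alpha, beta, xi) with
  alpha = (E, C), beta = (F, H), E, F location variables and C, H data
  variables (all parameters being distinct variables); it has exactly one base
  rule  alpha1 = beta1 /\ alpha2 = beta2 /\ emp,  at least one inductive rule, and
  all its other rules are inductive rules of the above shape.\<close>
definition base_rule :: "'n \<Rightarrow> 'n \<Rightarrow> 'n \<Rightarrow> 'n \<Rightarrow> ('n, 'l, 'd, 'c, 'pf, 'df, 'p) prule" where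
  "base_rule e c f hh = ([], [PEq (V (LV e)) (V (LV f)), PEq (V (DV c)) (V (DV hh))], [])"

definition synt_compositional :: "('n, 'l, 'd, 'c, 'pf, 'df, 'p) sid \<Rightarrow> 'p \<Rightarrow> bool" where
  "synt_compositional \<Delta> P \<longleftrightarrow>
    (\<exists>e c f hh xi rs.
       \<Delta> P = ([LV e, DV c, LV f, DV hh] @ xi, rs)
     \<and> distinct ([LV e, DV c, LV f, DV hh] @ xi)
     \<and> length (filter (\<lambda>r. r = base_rule e c f hh) rs) = 1
     \<and> (\<exists>r \<in> set rs. r \<noteq> base_rule e c f hh)
     \<and> (\<forall>r \<in> set rs. r \<noteq> base_rule e c f hh \<longrightarrow> comp_ind_rule P e c f hh xi r))"

definition subst_trm :: "'n \<Rightarrow> 'n \<Rightarrow> 'l \<Rightarrow> 'd \<Rightarrow> ('n, 'l, 'd) trm \<Rightarrow> ('n, 'l, 'd) trm" where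
  "subst_trm f hh c1 c2 t =
     (if t = V (LV f) then LC c1 else if t = V (DV hh) then DC c2 else t)"

fun subst_patom where
  "subst_patom f hh c1 c2 (PEq t1 t2) = PEq (subst_trm f hh c1 c2 t1) (subst_trm f hh c1 c2 t2)"
| "subst_patom f hh c1 c2 (PNeq t1 t2) = PNeq (subst_trm f hh c1 c2 t1) (subst_trm f hh c1 c2 t2)"
| "subst_patom f hh c1 c2 (PData d ts) = PData d (map (subst_trm f hh c1 c2) ts)"

fun subst_satom where
  "subst_satom f hh c1 c2 (SPt E ps ds) =
     SPt (subst_trm f hh c1 c2 E) (map (\<lambda>(g, t). (g, subst_trm f hh c1 c2 t)) ps)
         (map (\<lambda>(g, t). (g, subst_trm f hh c1 c2 t)) ds)"
| "subst_satom f hh c1 c2 (SPred Q ts) = SPred Q (map (subst_trm f hh c1 c2) ts)"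

text \<open>Renaming the recursive atoms P(gamma, beta, xi) into P'(gamma, xi).\<close>
fun ren_satom :: "'p \<Rightarrow> 'p \<Rightarrow> 'n \<Rightarrow> 'n \<Rightarrow> ('n, 'l, 'd, 'pf, 'df, 'p) satom \<Rightarrow> ('n, 'l, 'd, 'pf, 'df, 'p) satom" where
  "ren_satom P P' f hh (SPred Q ts) =
     (if Q = P \<and> length ts \<ge> 4 \<and> ts ! 2 = V (LV f) \<and> ts ! 3 = V (DV hh)
      then SPred P' (take 2 ts @ drop 4 ts) else SPred Q ts)"
| "ren_satom P P' f hh a = a"

definition compl_rule :: "'p \<Rightarrow> 'p \<Rightarrow> 'n \<Rightarrow> 'n \<Rightarrow> 'l \<Rightarrow> 'd
    \<Rightarrow> ('n, 'l, 'd, 'c, 'pf, 'df, 'p) prule \<Rightarrow> ('n, 'l, 'd, 'c, 'pf, 'df, 'p) prule" where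
  "compl_rule P P' f hh c1 c2 r =
     (case r of (Z, Pi, Sig) \<Rightarrow>
        (Z, map (subst_patom f hh c1 c2) Pi, map (subst_satom f hh c1 c2 \<circ> ren_satom P P' f hh) Sig))"

definition is_completion :: "('n, 'l, 'd, 'c, 'pf, 'df, 'p) sid \<Rightarrow> 'p \<Rightarrow> 'p \<Rightarrow> 'l \<Rightarrow> 'd \<Rightarrow> bool" where
  "is_completion \<Delta> P P' c1 c2 \<longleftrightarrow>
    (\<exists>e c f hh xi rs.
       \<Delta> P = ([LV e, DV c, LV f, DV hh] @ xi, rs)
     \<and> fst (\<Delta> P') = [LV e, DV c] @ xi
     \<and> set (snd (\<Delta> P')) = compl_rule P P' f hh c1 c2 ` set rs)"

end

theory Submission
  imports Defs
begin

lemma sat_sep_map: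
  assumes "\<And>a h. a \<in> set xs \<Longrightarrow> sat_satom I s h a \<Longrightarrow> sat_satom J s' h (g a)"
  shows "sat_sep I s h xs \<Longrightarrow> sat_sep J s' h (map g xs)"
  using assms by (induction xs arbitrary: h) fastforce+

lemma hunion_emp[simp]: "hunion hemp h = h" "hunion h hemp = h"
  by (auto simp: hunion_def hemp_def)
lemma hdisj_emp[simp]: "hdisj hemp h" "hdisj h hemp"
  by (auto simp: hdisj_def hemp_def)

lemma hdisj_sym: "hdisj h1 h2 = hdisj h2 h1"
  by (auto simp: hdisj_def)

lemma hunion_comm: "hdisj h1 h2 \<Longrightarrow> hunion h1 h2 = hunion h2 h1"
  by (auto simp: hdisj_def hunion_def intro: map_add_comm)

lemma hunion_assoc: "hunion (hunion h1 h2) h3 = hunion h1 (hunion h2 h3)"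
  by (simp add: hunion_def)

lemma hdisj_union_l: "hdisj (hunion h1 h2) h3 = (hdisj h1 h3 \<and> hdisj h2 h3)"
  by (auto simp: hdisj_def hunion_def)
lemma hdisj_union_r: "hdisj h3 (hunion h1 h2) = (hdisj h3 h1 \<and> hdisj h3 h2)"
  by (auto simp: hdisj_def hunion_def)

lemma sat_sep_append:
  "sat_sep I s h (xs @ ys) \<longleftrightarrow> (\<exists>h1 h2. hdisj h1 h2 \<and> h = hunion h1 h2 \<and> sat_sep I s h1 xs \<and> sat_sep I s h2 ys)"
proof (induction xs arbitrary: h)
  case Nil
  have "sat_sep I s h ys \<Longrightarrow> hdisj hemp h \<and> h = hunion hemp h \<and> sat_sep I s hemp [] \<and> sat_sep I s h ys" by simp
  then show ?case by (metis append_Nil hdisj_emp(1) hunion_emp(1) sat_sep.simps(1))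
next
  case (Cons a xs)
  show ?case
  proof
    assume "sat_sep I s h ((a # xs) @ ys)"
    then obtain h1 h2 where "hdisj h1 h2" "h = hunion h1 h2" "sat_satom I s h1 a" "sat_sep I s h2 (xs @ ys)" by auto
    moreover from this Cons obtain h3 h4 where "hdisj h3 h4" "h2 = hunion h3 h4" "sat_sep I s h3 xs" "sat_sep I s h4 ys" by auto
    ultimately have "hdisj (hunion h1 h3) h4 \<and> h = hunion (hunion h1 h3) h4 \<and> sat_sep I s (hunion h1 h3) (a # xs) \<and> sat_sep I s h4 ys"
      by (auto simp: hdisj_union_l hdisj_union_r hunion_assoc simp del: split_paired_Ex)
    then show "\<exists>h1 h2. hdisj h1 h2 \<and> h = hunion h1 h2 \<and> sat_sep I s h1 (a # xs) \<and> sat_sep I s h2 ys"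
      by blast
  next
    assume "\<exists>h1 h2. hdisj h1 h2 \<and> h = hunion h1 h2 \<and> sat_sep I s h1 (a # xs) \<and> sat_sep I s h2 ys"
    then obtain h1 h2 h3 h4 where "hdisj h1 h2" "h = hunion h1 h2" "hdisj h3 h4" "h1 = hunion h3 h4"
      "sat_satom I s h3 a" "sat_sep I s h4 xs" "sat_sep I s h2 ys" by auto
    moreover have "sat_sep I s (hunion h4 h2) (xs @ ys)" using calculation
      by (auto simp: Cons.IH hdisj_union_l simp del: split_paired_Ex)
    ultimately have "hdisj h3 (hunion h4 h2) \<and> h = hunion h3 (hunion h4 h2) \<and> sat_satom I s h3 a \<and> sat_sep I s (hunion h4 h2) (xs @ ys)"
      by (auto simp: hdisj_union_l hdisj_union_r hunion_assoc simp del: split_paired_Ex)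
    then show "sat_sep I s h ((a # xs) @ ys)" by (simp del: split_paired_Ex) blast
  qed
qed

lemma sat_sep_single: "sat_sep I s h [a] = sat_satom I s h a"
proof -
  have "sat_sep I s h [a] \<longleftrightarrow> (\<exists>h1 h2. hdisj h1 h2 \<and> h = hunion h1 h2 \<and> sat_satom I s h1 a \<and> h2 = hemp)"
    by (simp only: sat_sep.simps)
  also have "\<dots> \<longleftrightarrow> sat_satom I s h a" by (metis hdisj_emp(2) hunion_emp(2))
  finally show ?thesis .
qed

lemma sat_sep_mid:
  "sat_sep I s h (ys1 @ a # ys2) \<longleftrightarrow> sat_sep I s h (a # ys1 @ ys2)"
proof -
  have "sat_sep I s h (ys1 @ a # ys2) \<longleftrightarrow> sat_sep I s h (ys1 @ [a] @ ys2)" by simp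
  also have "\<dots> \<longleftrightarrow> sat_sep I s h ((ys1 @ [a]) @ ys2)" by simp
  also have "\<dots> \<longleftrightarrow> sat_sep I s h (([a] @ ys1) @ ys2)"
    unfolding sat_sep_append[of _ _ _ "_ @ _"]
    apply (simp only: sat_sep_append)
    by (metis hdisj_sym hunion_comm)
  finally show ?thesis by simp
qed

lemma sat_sep_perm:
  "mset xs = mset ys \<Longrightarrow> sat_sep I s h xs \<Longrightarrow> sat_sep I s h ys"
proof (induction xs arbitrary: ys h)
  case Nil then show ?case by simp
next
  case (Cons a xs)
  then have "a \<in> set ys" by (metis list.set_intros(1) set_mset_mset)
  then obtain ys1 ys2 where ys: "ys = ys1 @ a # ys2" by (meson split_list)
  then have "mset xs = mset (ys1 @ ys2)" using Cons.prems(1) by simp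
  then have "sat_sep I s h (a # ys1 @ ys2)" using Cons by fastforce
  then show ?case using ys sat_sep_mid by metis
qed


lemma sat_sep_unmap:
  assumes "\<And>a h. a \<in> set xs \<Longrightarrow> sat_satom J s h (g a) \<Longrightarrow> sat_satom I s' h a"
  shows "sat_sep J s h (map g xs) \<Longrightarrow> sat_sep I s' h xs"
  using assms by (induction xs arbitrary: h) fastforce+

definition upd :: "'n \<Rightarrow> 'n \<Rightarrow> 'l \<Rightarrow> 'd \<Rightarrow> ('n, 'l, 'd) stack \<Rightarrow> ('n, 'l, 'd) stack" where
  "upd f hh c1 c2 s = ((fst s)(f := c1), (snd s)(hh := c2))"

lemma evalt_subst: "evalt s (subst_trm f hh c1 c2 t) = evalt (upd f hh c1 c2 s) t"
proof (cases t)
  case (V x) then show ?thesis by (cases x) (auto simp: subst_trm_def upd_def)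
qed (auto simp: subst_trm_def upd_def)

lemma evalv_upd: "x \<noteq> LV f \<Longrightarrow> x \<noteq> DV hh \<Longrightarrow> evalv (upd f hh c1 c2 s) x = evalv s x"
  by (cases x) (auto simp: upd_def)

lemma upd_id: "fst s f = c1 \<Longrightarrow> snd s hh = c2 \<Longrightarrow> upd f hh c1 c2 s = s"
  by (auto simp: upd_def)

lemma sat_pure_subst: "sat_pure dI s (subst_patom f hh c1 c2 a) = sat_pure dI (upd f hh c1 c2 s) a"
  by (cases a) (simp_all add: evalt_subst comp_def)

lemma fst_map_subst: "fst ` set (map (\<lambda>(g, t). (g, F t)) ps) = fst ` set ps"
  by (force simp: image_iff)

lemma ball_map_pair: "(\<forall>(g, t) \<in> set (map (\<lambda>(g, t). (g, F t)) ps). Q g t) = (\<forall>(g, t) \<in> set ps. Q g (F t))"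
  by auto

lemma sat_pt_subst:
  "sat_pt s h (subst_trm f hh c1 c2 E) (map (\<lambda>(g, t). (g, subst_trm f hh c1 c2 t)) ps)
     (map (\<lambda>(g, t). (g, subst_trm f hh c1 c2 t)) ds) = sat_pt (upd f hh c1 c2 s) h E ps ds"
  unfolding sat_pt_def fst_map_subst ball_map_pair by (simp add: evalt_subst)

lemma split4: "length ts \<ge> 4 \<Longrightarrow> ts = take 2 ts @ [ts!2, ts!3] @ drop 4 ts"
  by (cases ts; cases "tl ts"; cases "tl (tl ts)"; cases "tl (tl (tl ts))"; simp)


lemma atom_fwd:
  assumes J1: "\<And>Q vs h. J Q vs h \<Longrightarrow> I Q vs h"
    and J2: "\<And>vs h. J P' vs h \<Longrightarrow> I P (take 2 vs @ [Loc c1, Dat c2] @ drop 2 vs) h"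
    and H: "sat_satom J s h (subst_satom f hh c1 c2 (ren_satom P P' f hh a))"
  shows "sat_satom I (upd f hh c1 c2 s) h a"
proof (cases a)
  case (SPt E ps ds)
  then show ?thesis using H by (simp add: sat_pt_subst)
next
  case (SPred Q ts)
  let ?s' = "upd f hh c1 c2 s"
  show ?thesis
  proof (cases "Q = P \<and> length ts \<ge> 4 \<and> ts ! 2 = V (LV f) \<and> ts ! 3 = V (DV hh)")
    case True
    then have "J P' (map (evalt ?s') (take 2 ts @ drop 4 ts)) h"
      using H SPred by (simp add: evalt_subst comp_def)
    then have "I P (take 2 (map (evalt ?s') (take 2 ts @ drop 4 ts)) @ [Loc c1, Dat c2]
          @ drop 2 (map (evalt ?s') (take 2 ts @ drop 4 ts))) h" by (rule J2)
    moreover have "take 2 (map (evalt ?s') (take 2 ts @ drop 4 ts)) @ [Loc c1, Dat c2]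
          @ drop 2 (map (evalt ?s') (take 2 ts @ drop 4 ts)) = map (evalt ?s') ts"
    proof -
      have "map (evalt ?s') ts = map (evalt ?s') (take 2 ts @ [ts!2, ts!3] @ drop 4 ts)"
        using split4 True by metis
      also have "\<dots> = map (evalt ?s') (take 2 ts) @ [Loc c1, Dat c2] @ map (evalt ?s') (drop 4 ts)"
        using True by (simp add: upd_def)
      moreover have "length (map (evalt ?s') (take 2 ts)) = 2" using True by simp
      ultimately show ?thesis by (simp only: map_append take_append drop_append) simp
    qed
    ultimately show ?thesis using SPred True by simp
  next
    case False
    then show ?thesis using H SPred by (auto simp: evalt_subst comp_def intro: J1)
  qed
qed

lemma atom_bwd:
  assumes J1: "\<And>Q vs h. J Q vs h \<Longrightarrow> I Q vs h"
    and J2: "\<And>vs h. J P vs h \<Longrightarrow> vs ! 2 = Loc c1 \<Longrightarrow> vs ! 3 = Dat c2 \<Longrightarrow> I P' (take 2 vs @ drop 4 vs) h"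
    and H: "sat_satom J (upd f hh c1 c2 s) h a"
  shows "sat_satom I s h (subst_satom f hh c1 c2 (ren_satom P P' f hh a))"
proof (cases a)
  case (SPt E ps ds)
  then show ?thesis using H by (simp add: sat_pt_subst)
next
  case (SPred Q ts)
  let ?s' = "upd f hh c1 c2 s"
  show ?thesis
  proof (cases "Q = P \<and> length ts \<ge> 4 \<and> ts ! 2 = V (LV f) \<and> ts ! 3 = V (DV hh)")
    case True
    then have "J P (map (evalt ?s') ts) h" using H SPred by simp
    moreover have "map (evalt ?s') ts ! 2 = Loc c1" "map (evalt ?s') ts ! 3 = Dat c2"
      using True by (auto simp: upd_def)
    ultimately have "I P' (take 2 (map (evalt ?s') ts) @ drop 4 (map (evalt ?s') ts)) h" by (rule J2)
    then show ?thesis using SPred True by (simp add: evalt_subst comp_def take_map drop_map)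
  next
    case False
    then show ?thesis using H SPred by (auto simp: evalt_subst comp_def intro: J1)
  qed
qed

lemma subst_trm_id: "LV f \<notin> vars_trm t \<Longrightarrow> DV hh \<notin> vars_trm t \<Longrightarrow> subst_trm f hh c1 c2 t = t"
  by (cases t) (auto simp: subst_trm_def)

lemma subst_patom_id: "LV f \<notin> vars_patom a \<Longrightarrow> DV hh \<notin> vars_patom a \<Longrightarrow> subst_patom f hh c1 c2 a = a"
  by (cases a) (auto simp: subst_trm_id intro!: map_idI)

lemma subst_satom_id: "LV f \<notin> vars_satom a \<Longrightarrow> DV hh \<notin> vars_satom a \<Longrightarrow> subst_satom f hh c1 c2 a = a"
proof (cases a)
  case (SPt E ps ds)
  assume "LV f \<notin> vars_satom a" "DV hh \<notin> vars_satom a"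
  then show ?thesis using SPt by (auto simp: subst_trm_id intro!: map_idI; metis subst_trm_id snd_conv)
qed (auto simp: subst_trm_id intro!: map_idI)

lemma ren_satom_id: "LV f \<notin> vars_satom a \<Longrightarrow> ren_satom P P' f hh a = a"
proof (cases a)
  case (SPred Q ts)
  assume A: "LV f \<notin> vars_satom a"
  have "\<not> (length ts \<ge> 4 \<and> ts ! 2 = V (LV f))"
  proof
    assume "length ts \<ge> 4 \<and> ts ! 2 = V (LV f)"
    then have "2 < length ts" by simp
    then have "ts ! 2 \<in> set ts" by (rule nth_mem)
    then have "V (LV f) \<in> set ts" using \<open>length ts \<ge> 4 \<and> ts ! 2 = V (LV f)\<close> by simp
    then show False using A SPred by force
  qed
  then show ?thesis using SPred by auto
qed auto


lemma compl_mem: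
  assumes "set (snd (\<Delta> P')) = compl_rule P P' f hh c1 c2 ` set rs"
    and "(Z, Pi, Sig) \<in> set (snd (\<Delta> P'))"
  obtains Pi0 Sig0 where "(Z, Pi0, Sig0) \<in> set rs" "Pi = map (subst_patom f hh c1 c2) Pi0"
    "Sig = map (subst_satom f hh c1 c2 \<circ> ren_satom P P' f hh) Sig0"
  using assms by (force simp: compl_rule_def split: prod.splits)

lemma compl_in:
  assumes "set (snd (\<Delta> P')) = compl_rule P P' f hh c1 c2 ` set rs"
    and "(Z, Pi0, Sig0) \<in> set rs"
  shows "(Z, map (subst_patom f hh c1 c2) Pi0, map (subst_satom f hh c1 c2 \<circ> ren_satom P P' f hh) Sig0) \<in> set (snd (\<Delta> P'))"
  using assms by (force simp: compl_rule_def)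

lemma map_evalv_upd: "LV f \<notin> set xs \<Longrightarrow> DV hh \<notin> set xs \<Longrightarrow> map (evalv (upd f hh c1 c2 s)) xs = map (evalv s) xs"
  by (auto intro!: map_cong evalv_upd)

lemma lemA:
  assumes DP: "\<Delta> P = ([LV e, DV c, LV f, DV hh] @ xi, rs)"
    and dist: "distinct ([LV e, DV c, LV f, DV hh] @ xi)"
    and DP'1: "fst (\<Delta> P') = [LV e, DV c] @ xi"
    and DP'2: "set (snd (\<Delta> P')) = compl_rule P P' f hh c1 c2 ` set rs"
  shows "pred_sem dI \<Delta> p vs h \<Longrightarrow> p = P' \<Longrightarrow> pred_sem dI \<Delta> P (take 2 vs @ [Loc c1, Dat c2] @ drop 2 vs) h"
proof (induction rule: pred_sem.induct)
  case (1 p ps rs' Z Pi Sig s vs h)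
  let ?s' = "upd f hh c1 c2 s"
  have ps: "ps = [LV e, DV c] @ xi" and rs': "rs' = snd (\<Delta> P')" using 1(1,6) DP'1 by (metis fst_conv snd_conv)+
  have zin: "(Z, Pi, Sig) \<in> set (snd (\<Delta> P'))" using 1(2) rs' by simp
  obtain Pi0 Sig0 where r: "(Z, Pi0, Sig0) \<in> set rs" "Pi = map (subst_patom f hh c1 c2) Pi0"
    "Sig = map (subst_satom f hh c1 c2 \<circ> ren_satom P P' f hh) Sig0"
    by (rule compl_mem[of \<Delta> P' P f hh c1 c2 rs Z Pi Sig, OF DP'2 zin])
  show ?case
  proof (rule pred_sem.intros[where \<Delta>=\<Delta> and p=P and s="upd f hh c1 c2 s", OF DP r(1)])
    show "map (evalv ?s') ([LV e, DV c, LV f, DV hh] @ xi) = take 2 vs @ [Loc c1, Dat c2] @ drop 2 vs"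
      using 1 ps dist by (auto simp: map_evalv_upd evalv_upd) (auto simp: upd_def)
    show "\<forall>a\<in>set Pi0. sat_pure dI ?s' a" using 1 r by (simp add: sat_pure_subst)
    show "sat_sep (pred_sem dI \<Delta>) ?s' h Sig0"
      apply (rule sat_sep_unmap[where J="\<lambda>x1 x2 x3. pred_sem dI \<Delta> x1 x2 x3 \<and> (x1 = P' \<longrightarrow> pred_sem dI \<Delta> P (take 2 x2 @ [Loc c1, Dat c2] @ drop 2 x2) x3)"
            and s=s and g="subst_satom f hh c1 c2 \<circ> ren_satom P P' f hh"])
       apply (rule atom_fwd[where J="\<lambda>x1 x2 x3. pred_sem dI \<Delta> x1 x2 x3 \<and> (x1 = P' \<longrightarrow> pred_sem dI \<Delta> P (take 2 x2 @ [Loc c1, Dat c2] @ drop 2 x2) x3)"])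
         apply simp_all
      using 1 r by simp
  qed
qed


lemma lemB:
  assumes DP: "\<Delta> P = ([LV e, DV c, LV f, DV hh] @ xi, rs)"
    and dist: "distinct ([LV e, DV c, LV f, DV hh] @ xi)"
    and DP'1: "fst (\<Delta> P') = [LV e, DV c] @ xi"
    and DP'2: "set (snd (\<Delta> P')) = compl_rule P P' f hh c1 c2 ` set rs"
  shows "pred_sem dI \<Delta> p vs h \<Longrightarrow> p = P \<Longrightarrow> vs ! 2 = Loc c1 \<Longrightarrow> vs ! 3 = Dat c2
     \<Longrightarrow> pred_sem dI \<Delta> P' (take 2 vs @ drop 4 vs) h"
proof (induction rule: pred_sem.induct)
  case (1 p ps rs' Z Pi Sig s vs h)
  have ps: "ps = [LV e, DV c, LV f, DV hh] @ xi" and rs': "rs' = rs" using 1 DP by simp_all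
  have sf: "fst s f = c1" "snd s hh = c2" using 1 ps by auto
  have us: "upd f hh c1 c2 s = s" using upd_id[OF sf] .
  have DP': "\<Delta> P' = ([LV e, DV c] @ xi, snd (\<Delta> P'))" using DP'1 by (metis prod.collapse)
  have mem: "(Z, map (subst_patom f hh c1 c2) Pi, map (subst_satom f hh c1 c2 \<circ> ren_satom P P' f hh) Sig) \<in> set (snd (\<Delta> P'))"
    using compl_in[of \<Delta> P' P f hh c1 c2 rs Z Pi Sig] DP'2 1 rs' by simp
  show ?case
  proof (rule pred_sem.intros[where \<Delta>=\<Delta> and p=P' and s=s, OF DP' mem])
    show "map (evalv s) ([LV e, DV c] @ xi) = take 2 vs @ drop 4 vs" using 1 ps by auto
    show "\<forall>a\<in>set (map (subst_patom f hh c1 c2) Pi). sat_pure dI s a" using 1 us by (simp add: sat_pure_subst)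
    show "sat_sep (pred_sem dI \<Delta>) s h (map (subst_satom f hh c1 c2 \<circ> ren_satom P P' f hh) Sig)"
      apply (rule sat_sep_map[where I="\<lambda>x1 x2 x3. pred_sem dI \<Delta> x1 x2 x3 \<and> (x1 = P \<longrightarrow> x2 ! 2 = Loc c1 \<longrightarrow> x2 ! 3 = Dat c2 \<longrightarrow> pred_sem dI \<Delta> P' (take 2 x2 @ drop 4 x2) x3)"
            and s=s])
       apply simp
       apply (rule atom_bwd[where J="\<lambda>x1 x2 x3. pred_sem dI \<Delta> x1 x2 x3 \<and> (x1 = P \<longrightarrow> x2 ! 2 = Loc c1 \<longrightarrow> x2 ! 3 = Dat c2 \<longrightarrow> pred_sem dI \<Delta> P' (take 2 x2 @ drop 4 x2) x3)"])
         apply simp_all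
       apply (simp add: us)
      using 1 by simp
  qed
qed


lemma comp_ind_ruleD:
  assumes "comp_ind_rule P e c f hh xi (Z, Pi, Sig)"
  obtains Sig1 Sig2 gam where
      "mset Sig = mset (Sig1 @ Sig2 @ [SPred P (map V gam @ [V (LV f), V (DV hh)] @ map V xi)])"
      "length gam = 2"
      "\<forall>x \<in> {LV f, DV hh}.
          x \<notin> \<Union> (vars_patom ` set Pi) \<and> x \<notin> \<Union> (vars_satom ` set Sig1)
        \<and> x \<notin> \<Union> (vars_satom ` set Sig2) \<and> x \<notin> set gam"
proof -
  from assms obtain Z0 Pi0 Sig0 Sig1 Sig2 gam where
    r: "(Z, Pi, Sig) = (Z0, Pi0, Sig0)"
    and m: "mset Sig0 = mset (Sig1 @ Sig2 @ [SPred P (map V gam @ [V (LV f), V (DV hh)] @ map V xi)])"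
    and l: "length gam = 2"
    and n: "\<forall>x \<in> {LV f, DV hh}.
          x \<notin> \<Union> (vars_patom ` set Pi0) \<and> x \<notin> \<Union> (vars_satom ` set Sig1)
        \<and> x \<notin> \<Union> (vars_satom ` set Sig2) \<and> x \<notin> set gam"
    unfolding comp_ind_rule_def by (elim exE conjE) (rule that, assumption+)
  then show ?thesis using that by simp
qed

lemma lemC:
  assumes DP: "\<Delta> P = ([LV e, DV c, LV f, DV hh] @ xi, rs)"
    and dist: "distinct ([LV e, DV c, LV f, DV hh] @ xi)"
    and ind: "\<forall>r \<in> set rs. r \<noteq> base_rule e c f hh \<longrightarrow> comp_ind_rule P e c f hh xi r"
    and DP'1: "fst (\<Delta> P') = [LV e, DV c] @ xi"
    and DP'2: "set (snd (\<Delta> P')) = compl_rule P P' f hh c1 c2 ` set rs"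
  shows "pred_sem dI \<Delta> p vs h1 \<Longrightarrow> p = P \<Longrightarrow>
     (\<forall>h2. hdisj h1 h2 \<longrightarrow> pred_sem dI \<Delta> P' (drop 2 vs) h2
        \<longrightarrow> pred_sem dI \<Delta> P' (take 2 vs @ drop 4 vs) (hunion h1 h2))"
proof (induction rule: pred_sem.induct)
  case (1 p ps rs' Z Pi Sig s vs h)
  have ps: "ps = [LV e, DV c, LV f, DV hh] @ xi" and rs': "rs' = rs" using 1 DP by simp_all
  have DP': "\<Delta> P' = ([LV e, DV c] @ xi, snd (\<Delta> P'))" using DP'1 by (metis prod.collapse)
  have rin: "(Z, Pi, Sig) \<in> set rs" using 1 rs' by simp
  show ?case
  proof (cases "(Z, Pi, Sig) = base_rule e c f hh")
    case True
    then have "Pi = [PEq (V (LV e)) (V (LV f)), PEq (V (DV c)) (V (DV hh))]" "Sig = []"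
      by (auto simp: base_rule_def)
    then have "h = hemp" "fst s e = fst s f" "snd s c = snd s hh" using 1 by auto
    moreover have "take 2 vs @ drop 4 vs = drop 2 vs" using 1 ps calculation by (auto simp del: split_paired_All)
    ultimately show ?thesis by simp
  next
    case False
    then have "comp_ind_rule P e c f hh xi (Z, Pi, Sig)" using ind rin by blast
    then obtain Sig1 Sig2 gam where
      ms: "mset Sig = mset (Sig1 @ Sig2 @ [SPred P (map V gam @ [V (LV f), V (DV hh)] @ map V xi)])"
      and lg: "length gam = 2"
      and nocc: "\<forall>x \<in> {LV f, DV hh}.
          x \<notin> \<Union> (vars_patom ` set Pi) \<and> x \<notin> \<Union> (vars_satom ` set Sig1)
        \<and> x \<notin> \<Union> (vars_satom ` set Sig2) \<and> x \<notin> set gam"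
      by (rule comp_ind_ruleD)
    let ?Rec = "SPred P (map V gam @ [V (LV f), V (DV hh)] @ map V xi)"
    let ?Rec' = "SPred P' (map V gam @ map V xi)"
    let ?g = "subst_satom f hh c1 c2 \<circ> ren_satom P P' f hh"
    let ?J = "\<lambda>x1 x2 x3. pred_sem dI \<Delta> x1 x2 x3 \<and> (x1 = P \<longrightarrow> (\<forall>h2. hdisj x3 h2 \<longrightarrow> pred_sem dI \<Delta> P' (drop 2 x2) h2
        \<longrightarrow> pred_sem dI \<Delta> P' (take 2 x2 @ drop 4 x2) (hunion x3 h2)))"
    have xif: "LV f \<notin> set xi" "DV hh \<notin> set xi" using dist by auto
    have gid: "?g a = a" if "a \<in> set (Sig1 @ Sig2)" for a
      using nocc that by (auto simp: ren_satom_id subst_satom_id)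
    have grec: "?g ?Rec = ?Rec'"
    proof -
      have "ren_satom P P' f hh ?Rec = ?Rec'" using lg by (simp add: nth_append)
      moreover have "subst_satom f hh c1 c2 ?Rec' = ?Rec'"
        using nocc xif by (auto simp: subst_trm_def intro!: map_idI)
      ultimately show ?thesis by (metis o_apply)
    qed
    have mg: "mset (Sig1 @ Sig2 @ [?Rec']) = mset (map ?g Sig)"
    proof -
      have "mset (map ?g Sig) = image_mset ?g (mset Sig)" by (simp only: mset_map)
      also have "\<dots> = image_mset ?g (mset (Sig1 @ Sig2 @ [?Rec]))" using ms by (simp only:)
      also have "\<dots> = mset (map ?g (Sig1 @ Sig2 @ [?Rec]))" by (simp only: mset_map)
      also have "map ?g (Sig1 @ Sig2 @ [?Rec]) = Sig1 @ Sig2 @ [?Rec']"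
        using gid grec by (simp add: map_idI)
      finally show ?thesis by (simp only:)
    qed
    have "sat_sep ?J s h (Sig1 @ Sig2 @ [?Rec])" using sat_sep_perm[OF ms] 1 by blast
    then have "sat_sep ?J s h ((Sig1 @ Sig2) @ [?Rec])" by simp
    then obtain hA hR where hAR: "hdisj hA hR" "h = hunion hA hR" "sat_sep ?J s hA (Sig1 @ Sig2)"
      "sat_sep ?J s hR [?Rec]" unfolding sat_sep_append by blast
    then have JR: "?J P (map (evalt s) (map V gam @ [V (LV f), V (DV hh)] @ map V xi)) hR"
      by (auto simp del: split_paired_Ex)
    have Pi_id: "map (subst_patom f hh c1 c2) Pi = Pi"
      using nocc by (auto intro!: map_idI subst_patom_id)
    have mem: "(Z, Pi, map ?g Sig) \<in> set (snd (\<Delta> P'))"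
      using compl_in[of \<Delta> P' P f hh c1 c2 rs Z Pi Sig] DP'2 rin Pi_id by simp
    show ?thesis
    proof (intro allI impI)
      fix h2 assume d: "hdisj h h2" and p2: "pred_sem dI \<Delta> P' (drop 2 vs) h2"
      have d2: "hdisj hA (hunion hR h2)" "hdisj hR h2" using d hAR by (auto simp: hdisj_union_l hdisj_union_r)
      have "drop 2 (map (evalt s) (map V gam @ [V (LV f), V (DV hh)] @ map V xi)) = drop 2 vs"
        using 1(3)[symmetric] ps lg by (simp add: comp_def)
      then have "pred_sem dI \<Delta> P' (take 2 (map (evalt s) (map V gam @ [V (LV f), V (DV hh)] @ map V xi))
          @ drop 4 (map (evalt s) (map V gam @ [V (LV f), V (DV hh)] @ map V xi))) (hunion hR h2)"
        using JR d2 p2 by (auto simp del: split_paired_All)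
      then have pR: "pred_sem dI \<Delta> P' (map (evalv s) gam @ map (evalv s) xi) (hunion hR h2)"
        using lg by (simp add: comp_def)
      have SA: "sat_sep (pred_sem dI \<Delta>) s hA (Sig1 @ Sig2)"
      proof -
        have le: "?J \<le> pred_sem dI \<Delta>" by (auto simp: le_fun_def)
        show ?thesis using sat_sep_mono[OF le] hAR(3) by blast
      qed
      have SB: "sat_sep (pred_sem dI \<Delta>) s (hunion hR h2) [?Rec']"
        using pR by (simp only: sat_sep_single sat_satom.simps) (simp add: comp_def)
      have "sat_sep (pred_sem dI \<Delta>) s (hunion hA (hunion hR h2)) ((Sig1 @ Sig2) @ [?Rec'])"
        apply (rule sat_sep_append[THEN iffD2])
        using d2(1) SA SB by blast
      then have "sat_sep (pred_sem dI \<Delta>) s (hunion hA (hunion hR h2)) (Sig1 @ Sig2 @ [?Rec'])"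
        by (simp only: append_assoc)
      then have "sat_sep (pred_sem dI \<Delta>) s (hunion hA (hunion hR h2)) (map ?g Sig)"
        by (rule sat_sep_perm[OF mg])
      then have SS: "sat_sep (pred_sem dI \<Delta>) s (hunion h h2) (map ?g Sig)"
        using hAR(2) by (simp only: hunion_assoc)
      have V: "map (evalv s) ([LV e, DV c] @ xi) = take 2 vs @ drop 4 vs" using 1(3) ps by auto
      have PP: "\<forall>a\<in>set Pi. sat_pure dI s a" using 1(4) .
      show "pred_sem dI \<Delta> P' (take 2 vs @ drop 4 vs) (hunion h h2)"
        by (rule pred_sem.intros[where \<Delta>=\<Delta> and p=P' and s=s, OF DP' mem V PP SS])
    qed
  qed
qed

theorem theorem2:
  fixes \<Delta> :: "('n, 'l, 'd, 'c, 'pf, 'df, 'p) sid"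
    and dI :: "'c \<Rightarrow> 'd list \<Rightarrow> bool"
    and P P' :: 'p and e c f hh :: 'n and xi :: "'n var list" and c1 :: 'l and c2 :: 'd
  assumes params: "fst (\<Delta> P) = [LV e, DV c, LV f, DV hh] @ xi"
    and comp: "synt_compositional \<Delta> P"
    and compl: "is_completion \<Delta> P P' c1 c2"
  shows "(equiv_sl dI \<Delta>
           (FAtom (SPred P' (map V ([LV e, DV c] @ xi))))
           (FAtom (SPred P ([V (LV e), V (DV c), LC c1, DC c2] @ map V xi))))
       \<and> entails dI \<Delta>
           (FEx (LV f) (FEx (DV hh)
              (FSep (FAtom (SPred P (map V ([LV e, DV c, LV f, DV hh] @ xi))))
                    (FAtom (SPred P' (map V ([LV f, DV hh] @ xi)))))))
           (FAtom (SPred P' (map V ([LV e, DV c] @ xi))))"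
  proof -
  obtain e' c' f' hh' xi' rs where DP0: "\<Delta> P = ([LV e', DV c', LV f', DV hh'] @ xi', rs)"
    and dist0: "distinct ([LV e', DV c', LV f', DV hh'] @ xi')"
    and ind0: "\<forall>r \<in> set rs. r \<noteq> base_rule e' c' f' hh' \<longrightarrow> comp_ind_rule P e' c' f' hh' xi' r"
    using comp unfolding synt_compositional_def by blast
  have eq: "e' = e" "c' = c" "f' = f" "hh' = hh" "xi' = xi" using DP0 params by simp_all
  have DP: "\<Delta> P = ([LV e, DV c, LV f, DV hh] @ xi, rs)" using DP0 eq by simp
  have dist: "distinct ([LV e, DV c, LV f, DV hh] @ xi)" using dist0 eq by simp
  have ind: "\<forall>r \<in> set rs. r \<noteq> base_rule e c f hh \<longrightarrow> comp_ind_rule P e c f hh xi r" using ind0 eq by simp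
  obtain e2 c2' f2 hh2 xi2 rs2 where DPb: "\<Delta> P = ([LV e2, DV c2', LV f2, DV hh2] @ xi2, rs2)"
    and DP'1a: "fst (\<Delta> P') = [LV e2, DV c2'] @ xi2"
    and DP'2a: "set (snd (\<Delta> P')) = compl_rule P P' f2 hh2 c1 c2 ` set rs2"
    using compl unfolding is_completion_def by blast
  have eq2: "e2 = e" "c2' = c" "f2 = f" "hh2 = hh" "xi2 = xi" "rs2 = rs" using DPb DP by simp_all
  have DP'1: "fst (\<Delta> P') = [LV e, DV c] @ xi" using DP'1a eq2 by simp
  have DP'2: "set (snd (\<Delta> P')) = compl_rule P P' f hh c1 c2 ` set rs" using DP'2a eq2 by simp
  note A = lemA[OF DP dist DP'1 DP'2]
  note B = lemB[OF DP dist DP'1 DP'2]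
  note C = lemC[OF DP dist ind DP'1 DP'2]
  have part1: "equiv_sl dI \<Delta>
           (FAtom (SPred P' (map V ([LV e, DV c] @ xi))))
           (FAtom (SPred P ([V (LV e), V (DV c), LC c1, DC c2] @ map V xi)))"
    unfolding equiv_sl_def entails_def
  proof (intro conjI allI impI)
    fix s h
    assume "sat dI \<Delta> s h (FAtom (SPred P' (map V ([LV e, DV c] @ xi))))"
    then have "pred_sem dI \<Delta> P' ([evalv s (LV e), evalv s (DV c)] @ map (evalv s) xi) h"
      by (simp add: comp_def)
    from A[OF this refl] show "sat dI \<Delta> s h (FAtom (SPred P ([V (LV e), V (DV c), LC c1, DC c2] @ map V xi)))"
      by (simp add: comp_def)
  next
    fix s h
    assume "sat dI \<Delta> s h (FAtom (SPred P ([V (LV e), V (DV c), LC c1, DC c2] @ map V xi)))"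
    then have "pred_sem dI \<Delta> P ([evalv s (LV e), evalv s (DV c), Loc c1, Dat c2] @ map (evalv s) xi) h"
      by (simp add: comp_def)
    from B[OF this refl] show "sat dI \<Delta> s h (FAtom (SPred P' (map V ([LV e, DV c] @ xi))))"
      by (simp add: comp_def)
  qed
  have part2: "entails dI \<Delta>
           (FEx (LV f) (FEx (DV hh)
              (FSep (FAtom (SPred P (map V ([LV e, DV c, LV f, DV hh] @ xi))))
                    (FAtom (SPred P' (map V ([LV f, DV hh] @ xi)))))))
           (FAtom (SPred P' (map V ([LV e, DV c] @ xi))))"
    unfolding entails_def
  proof (intro allI impI)
    fix s h
    assume "sat dI \<Delta> s h (FEx (LV f) (FEx (DV hh)
              (FSep (FAtom (SPred P (map V ([LV e, DV c, LV f, DV hh] @ xi))))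
                    (FAtom (SPred P' (map V ([LV f, DV hh] @ xi)))))))"
    then obtain l d h1 h2 where hh1: "hdisj h1 h2" "h = hunion h1 h2"
      "pred_sem dI \<Delta> P (map (evalv (upd f hh l d s)) ([LV e, DV c, LV f, DV hh] @ xi)) h1"
      "pred_sem dI \<Delta> P' (map (evalv (upd f hh l d s)) ([LV f, DV hh] @ xi)) h2"
      by (auto simp: upd_def comp_def simp del: split_paired_Ex)
    have xif: "LV f \<notin> set xi" "DV hh \<notin> set xi" and ne: "LV e \<noteq> LV f" "DV c \<noteq> DV hh" using dist by auto
    have D: "pred_sem dI \<Delta> P' (drop 2 (map (evalv (upd f hh l d s)) ([LV e, DV c, LV f, DV hh] @ xi))) h2"
      using hh1(4) by simp
    have "pred_sem dI \<Delta> P'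
       (take 2 (map (evalv (upd f hh l d s)) ([LV e, DV c, LV f, DV hh] @ xi))
        @ drop 4 (map (evalv (upd f hh l d s)) ([LV e, DV c, LV f, DV hh] @ xi))) (hunion h1 h2)"
      using C[OF hh1(3) refl, rule_format, OF hh1(1) D] .
    then have "pred_sem dI \<Delta> P'
       (take 2 (map (evalv (upd f hh l d s)) ([LV e, DV c, LV f, DV hh] @ xi))
        @ drop 4 (map (evalv (upd f hh l d s)) ([LV e, DV c, LV f, DV hh] @ xi))) h"
      using hh1(2) by simp
    then show "sat dI \<Delta> s h (FAtom (SPred P' (map V ([LV e, DV c] @ xi))))"
      using xif ne by (simp add: comp_def map_evalv_upd) (simp add: upd_def)
  qed
  show ?thesis using part1 part2 by blast
qed

end
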